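(* For all $a_0,a_1,a_2,a_3\in\mathcal{A}(\mathbb{CP}^1_q)$, $$\int_h a_0\,(\partial a_1\,\bar\partial a_2)\,a_3=\int_h \sigma(a_3)\,a_0\,\partial a_1\,\bar\partial a_2 .$$
   Context: Fix $0<q<1$. Let $\mathcal{A}(SU_q(2))$ be the unital complex $*$-algebra generated by $a,c$ subject to $ac=qca$, $ac^*=qc^*a$, $cc^*=c^*c$, $a^*a+c^*c=aa^*+q^2cc^*=1$, a Hopf $*$-algebra with $\Delta a=a\otimes a-qc^*\otimes c$, $\Delta c=c\otimes a+a^*\otimes c$. Let $U_q(su(2))$ be the Hopf algebra generated by $K,K^{-1},E,F$ with $KK^{-1}=K^{-1}K=1$, $KE=qEK$, $KF=q^{-1}FK$, $EF-FE=(K^2-K^{-2})/(q-q^{-1})$, $\Delta K=K\otimes K$, $\Delta E=E\otimes K+K^{-1}\otimes E$, $\Delta F=F\otimes K+K^{-1}\otimes F$, $\epsilon(K)=1,\epsilon(E)=\epsilon(F)=0$, acting on $\mathcal{A}(SU_q(2))$ as a left module algebra with $K\triangleright a=q^{-1/2}a$, $K\triangleright c=q^{-1/2}c$, $K\triangleright a^*=q^{1/2}a^*$, $K\triangleright c^*=q^{1/2}c^*$, $E\triangleright a=-qc^*$, $E\triangleright c=a^*$, $E\triangleright a^*=E\triangleright c^*=0$, $F\triangleright a=F\triangleright c=0$, $F\triangleright a^*=c$, $F\triangleright c^*=-q^{-1}a$. Put $X_-=q^{-1/2}FK$, $X_+=q^{1/2}EK$. Let $\mathcal{L}_k=\{x:K\triangleright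 x=q^{k/2}x\}$ and $\mathcal{A}(\mathbb{CP}^1_q):=\mathcal{L}_0$. Forms: $\Omega^1(SU_q(2))$ is the bimodule free as a left module on $\omega_+,\omega_-,\omega_z$ with $\omega_\pm x=q^kx\omega_\pm$, $\omega_zx=q^{2k}x\omega_z$ for $x\in\mathcal{L}_k$; products of 1-forms are taken in the exterior algebra where $\omega_\pm\wedge\omega_\pm=0$ and $\omega_+\wedge\omega_-=-q^2\omega_-\wedge\omega_+$. For $f\in\mathcal{A}(\mathbb{CP}^1_q)$: $\partial f=(X_+\triangleright f)\omega_+$, $\bar\partial f=(X_-\triangleright f)\omega_-$. $\Omega^2(\mathbb{CP}^1_q):=\mathcal{A}(\mathbb{CP}^1_q)\,\omega_-\wedge\omega_+$. Let $h$ be the Haar state: the linear functional on $\mathcal{A}(SU_q(2))$ with $h(1)=1$ and $(\mathrm{id}\otimes h)\Delta(x)=h(x)1$ (faithful and positive). Its modular automorphism $\sigma$ is the unique algebra automorphism of $\mathcal{A}(SU_q(2))$ with $h(xy)=h(\sigma(y)x)$ for all $x,y$; it maps $\mathcal{A}(\mathbb{CP}^1_q)$ to itself. Define $\int_h:\Omega^2(\mathbb{CP}^1_q)\to\mathbb{C}$ by $\int_h x\,\omega_-\wedge\omega_+=h(x)$. *)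

theory Defs
  imports Complex_Main "HOL-Library.Poly_Mapping" "HOL-Library.Product_Plus"
begin

datatype gen = GA | GAst | GC | GCst

datatype word = Word "gen list"

instantiation word :: monoid_add
begin
definition zero_word :: word where "zero_word = Word []"
fun plus_word :: "word \<Rightarrow> word \<Rightarrow> word" where
  "plus_word (Word u) (Word v) = Word (u @ v)"
instance
proof
  fix a b c :: word
  show "a + b + c = a + (b + c)" by (cases a; cases b; cases c) simp
  show "0 + a = a" by (cases a) (simp add: zero_word_def)
  show "a + 0 = a" by (cases a) (simp add: zero_word_def)
qed
end

text \<open>Free unital complex algebra C<a,a*,c,c*>: finitely supported functions on words,
  product = concatenation convolution.\<close>
type_synonym falg = "word \<Rightarrow>\<^sub>0 complex"

text \<open>Algebraic tensor product of two copies of the free algebra.\<close>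
type_synonym ftens = "(word \<times> word) \<Rightarrow>\<^sub>0 complex"

definition sc :: "complex \<Rightarrow> falg" where "sc c = Poly_Mapping.single 0 c"
definition gen :: "gen \<Rightarrow> falg" where "gen g = Poly_Mapping.single (Word [g]) 1"
definition basis :: "word \<Rightarrow> falg" where "basis w = Poly_Mapping.single w 1"

abbreviation "ea \<equiv> gen GA"
abbreviation "east \<equiv> gen GAst"
abbreviation "ec \<equiv> gen GC"
abbreviation "ecst \<equiv> gen GCst"

text \<open>Defining relations of the *-algebra A(SU_q(2)) (with their adjoints).\<close>
definition relations :: "real \<Rightarrow> falg set" where
  "relations q = {
     ea * ec - sc q * (ec * ea),
     ea * ecst - sc q * (ecst * ea),
     ec * ecst - ecst * ec,
     east * ea + ecst * ec - 1,
     ea * east + sc (q^2) * (ec * ecst) - 1,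
     ecst * east - sc q * (east * ecst),
     ec * east - sc q * (east * ec) }"

inductive_set rel_ideal :: "real \<Rightarrow> falg set" for q where
  gen_in: "r \<in> relations q \<Longrightarrow> r \<in> rel_ideal q"
| zero_in: "0 \<in> rel_ideal q"
| add_in: "x \<in> rel_ideal q \<Longrightarrow> y \<in> rel_ideal q \<Longrightarrow> x + y \<in> rel_ideal q"
| mult_in: "x \<in> rel_ideal q \<Longrightarrow> u * x * v \<in> rel_ideal q"

definition suq_eq :: "real \<Rightarrow> falg \<Rightarrow> falg \<Rightarrow> bool" where
  "suq_eq q x y \<longleftrightarrow> x - y \<in> rel_ideal q"

definition word_eval :: "(gen \<Rightarrow> 'r::ring_1) \<Rightarrow> word \<Rightarrow> 'r" where
  "word_eval \<phi> w = (case w of Word gs \<Rightarrow> prod_list (map \<phi> gs))"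

definition ext_hom :: "(gen \<Rightarrow> 'r::ring_1) \<Rightarrow> (complex \<Rightarrow> 'r) \<Rightarrow> falg \<Rightarrow> 'r" where
  "ext_hom \<phi> emb f = (\<Sum>w\<in>Poly_Mapping.keys f. emb (Poly_Mapping.lookup f w) * word_eval \<phi> w)"

definition tens :: "falg \<Rightarrow> falg \<Rightarrow> ftens" where
  "tens x y = (\<Sum>u\<in>Poly_Mapping.keys x. \<Sum>v\<in>Poly_Mapping.keys y. Poly_Mapping.single (u, v) (Poly_Mapping.lookup x u * Poly_Mapping.lookup y v))"

definition tsc :: "complex \<Rightarrow> ftens" where "tsc c = Poly_Mapping.single 0 c"

definition delta_gen :: "real \<Rightarrow> gen \<Rightarrow> ftens" where
  "delta_gen q g = (case g of
      GA \<Rightarrow> tens ea ea - tsc q * tens ecst ec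
    | GC \<Rightarrow> tens ec ea + tens east ec
    | GAst \<Rightarrow> tens east east - tsc q * tens ec ecst
    | GCst \<Rightarrow> tens ecst east + tens ea ecst)"

definition Delta :: "real \<Rightarrow> falg \<Rightarrow> ftens" where
  "Delta q = ext_hom (delta_gen q) tsc"

definition id_tensor :: "(falg \<Rightarrow> complex) \<Rightarrow> ftens \<Rightarrow> falg" where
  "id_tensor h T = (\<Sum>p\<in>Poly_Mapping.keys T. sc (Poly_Mapping.lookup T p * h (basis (snd p))) * basis (fst p))"

definition is_haar_state :: "real \<Rightarrow> (falg \<Rightarrow> complex) \<Rightarrow> bool" where
  "is_haar_state q h \<longleftrightarrow>
     (\<forall>x\<in>rel_ideal q. h x = 0) \<and>
     (\<forall>x y. h (x + y) = h x + h y) \<and>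
     (\<forall>c x. h (sc c * x) = c * h x) \<and>
     h 1 = 1 \<and>
     (\<forall>x. suq_eq q (id_tensor h (Delta q x)) (sc (h x)))"

definition is_modular_aut :: "real \<Rightarrow> (falg \<Rightarrow> complex) \<Rightarrow> (falg \<Rightarrow> falg) \<Rightarrow> bool" where
  "is_modular_aut q h \<sigma> \<longleftrightarrow>
     (\<forall>x y. suq_eq q x y \<longrightarrow> suq_eq q (\<sigma> x) (\<sigma> y)) \<and>
     (\<forall>x y. suq_eq q (\<sigma> (x + y)) (\<sigma> x + \<sigma> y)) \<and>
     (\<forall>c x. suq_eq q (\<sigma> (sc c * x)) (sc c * \<sigma> x)) \<and>
     (\<forall>x y. suq_eq q (\<sigma> (x * y)) (\<sigma> x * \<sigma> y)) \<and>
     suq_eq q (\<sigma> 1) 1 \<and>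
     (\<forall>y. \<exists>x. suq_eq q (\<sigma> x) y) \<and>
     (\<forall>x y. suq_eq q (\<sigma> x) (\<sigma> y) \<longrightarrow> suq_eq q x y) \<and>
     (\<forall>x y. h (x * y) = h (\<sigma> y * x))"

text \<open>Weight: a, c in L_{-1}; a*, c* in L_1 (K acts by q^(k/2) on L_k).\<close>
definition gwt :: "gen \<Rightarrow> int" where
  "gwt g = (case g of GA \<Rightarrow> -1 | GC \<Rightarrow> -1 | GAst \<Rightarrow> 1 | GCst \<Rightarrow> 1)"

definition wt :: "word \<Rightarrow> int" where
  "wt w = (case w of Word gs \<Rightarrow> sum_list (map gwt gs))"

definition deg_scale :: "real \<Rightarrow> real \<Rightarrow> falg \<Rightarrow> falg" where
  "deg_scale q r f = Poly_Mapping.mapp (\<lambda>w c. complex_of_real (q powr (r * of_int (wt w))) * c) f"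

definition Kact :: "real \<Rightarrow> falg \<Rightarrow> falg" where "Kact q = deg_scale q (1/2)"
definition Kinv :: "real \<Rightarrow> falg \<Rightarrow> falg" where "Kinv q = deg_scale q (-1/2)"

definition E_gen :: "real \<Rightarrow> gen \<Rightarrow> falg" where
  "E_gen q g = (case g of GA \<Rightarrow> - (sc q * ecst) | GC \<Rightarrow> east | GAst \<Rightarrow> 0 | GCst \<Rightarrow> 0)"

definition F_gen :: "real \<Rightarrow> gen \<Rightarrow> falg" where
  "F_gen q g = (case g of GA \<Rightarrow> 0 | GC \<Rightarrow> 0 | GAst \<Rightarrow> ec | GCst \<Rightarrow> - (sc (inverse q) * ea))"

text \<open>Extension as a twisted derivation, using Delta(E) = E \<otimes> K + K^{-1} \<otimes> E
  (the same for F): h.(gx) = (h.g)(K.x) + (K^{-1}.g)(h.x).\<close>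
fun twder_list :: "real \<Rightarrow> (gen \<Rightarrow> falg) \<Rightarrow> gen list \<Rightarrow> falg" where
  "twder_list q D [] = 0"
| "twder_list q D (g # gs) = D g * Kact q (basis (Word gs)) + Kinv q (gen g) * twder_list q D gs"

definition twder :: "real \<Rightarrow> (gen \<Rightarrow> falg) \<Rightarrow> falg \<Rightarrow> falg" where
  "twder q D f = (\<Sum>w\<in>Poly_Mapping.keys f. sc (Poly_Mapping.lookup f w) * (case w of Word gs \<Rightarrow> twder_list q D gs))"

definition Eact :: "real \<Rightarrow> falg \<Rightarrow> falg" where "Eact q = twder q (E_gen q)"
definition Fact :: "real \<Rightarrow> falg \<Rightarrow> falg" where "Fact q = twder q (F_gen q)"

definition Xplus :: "real \<Rightarrow> falg \<Rightarrow> falg" where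
  "Xplus q x = sc (q powr (1/2)) * Eact q (Kact q x)"
definition Xminus :: "real \<Rightarrow> falg \<Rightarrow> falg" where
  "Xminus q x = sc (q powr (-1/2)) * Fact q (Kact q x)"

definition CP1 :: "real \<Rightarrow> falg set" where
  "CP1 q = {x. suq_eq q (Kact q x) x}"

text \<open>1-forms in the span of omega_+ and omega_-: (x, y) stands for x omega_+ + y omega_-.
  Right multiplication: omega_\<pm> x = q^k x omega_\<pm> for x in L_k.\<close>
type_synonym form1pm = "falg \<times> falg"

text \<open>2-forms x omega_- \<and> omega_+ are represented by their coefficient x.\<close>
type_synonym form2 = falg

definition del :: "real \<Rightarrow> falg \<Rightarrow> form1pm" where "del q f = (Xplus q f, 0)"
definition delbar :: "real \<Rightarrow> falg \<Rightarrow> form1pm" where "delbar q f = (0, Xminus q f)"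

text \<open>Wedge product, using omega_\<pm> \<and> omega_\<pm> = 0, omega_+ \<and> omega_- = -q^2 omega_- \<and> omega_+:
  (x+ w+ + x- w-) \<and> (y+ w+ + y- w-) = (x- (w- y+) - q^2 x+ (w+ y-)) ...\<close>
definition wedge :: "real \<Rightarrow> form1pm \<Rightarrow> form1pm \<Rightarrow> form2" where
  "wedge q \<alpha> \<beta> = snd \<alpha> * deg_scale q 1 (fst \<beta>) - sc (q^2) * (fst \<alpha> * deg_scale q 1 (snd \<beta>))"

definition lmul2 :: "falg \<Rightarrow> form2 \<Rightarrow> form2" where "lmul2 a x = a * x"

text \<open>(x omega_- \<and> omega_+) a = x q^(2k) a omega_- \<and> omega_+ for a in L_k.\<close>
definition rmul2 :: "real \<Rightarrow> form2 \<Rightarrow> falg \<Rightarrow> form2" where "rmul2 q x a = x * deg_scale q 2 a"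

definition int_h :: "(falg \<Rightarrow> complex) \<Rightarrow> form2 \<Rightarrow> complex" where "int_h h x = h x"

end

theory Submission imports Defs begin

lemma pm_induct:
  fixes f :: "'a \<Rightarrow>\<^sub>0 'b::comm_monoid_add"
  assumes "P 0" and "\<And>f k c. P f \<Longrightarrow> P (f + Poly_Mapping.single k c)"
  shows "P f"
proof (induction f rule: update_induct)
  case const then show ?case using assms(1) .
next
  case (update f a b)
  have "Poly_Mapping.update a b f = f + Poly_Mapping.single a b"
    using update(1) by (intro poly_mapping_eqI) (auto simp: lookup_update lookup_add lookup_single in_keys_iff when_def)
  then show ?case using assms(2)[OF update(3)] by simp
qed

lemma lookup_ds: "Poly_Mapping.lookup (deg_scale q r f) w = complex_of_real (q powr (r * of_int (wt w))) * Poly_Mapping.lookup f w"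
  unfolding deg_scale_def by (simp add: lookup_mapp when_def in_keys_iff)

lemma ds_add: "deg_scale q r (f + g) = deg_scale q r f + deg_scale q r g"
  by (intro poly_mapping_eqI) (simp add: lookup_ds lookup_add algebra_simps)
lemma ds_diff: "deg_scale q r (f - g) = deg_scale q r f - deg_scale q r g"
  by (intro poly_mapping_eqI) (simp add: lookup_ds lookup_minus algebra_simps)
lemma ds_zero: "deg_scale q r 0 = 0"
  by (intro poly_mapping_eqI) (simp add: lookup_ds)
lemma ds_single: "deg_scale q r (Poly_Mapping.single w c) = Poly_Mapping.single w (complex_of_real (q powr (r * of_int (wt w))) * c)"
  by (intro poly_mapping_eqI) (simp add: lookup_ds lookup_single when_def)
lemma ds_comp: "deg_scale q r (deg_scale q s f) = deg_scale q (r + s) f"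
  by (intro poly_mapping_eqI) (simp add: lookup_ds powr_add distrib_right)

lemma wt_plus: "wt (u + v) = wt u + wt v"
  by (cases u; cases v) (simp add: wt_def)
lemma wt_zero: "wt 0 = 0"
  by (simp add: wt_def zero_word_def)

lemma ds_mult_single: "deg_scale q r (Poly_Mapping.single k c * g) = deg_scale q r (Poly_Mapping.single k c) * deg_scale q r g"
proof (induction g rule: pm_induct)
  case 1 then show ?case by (simp add: ds_zero)
next
  case (2 f l d)
  then show ?case by (simp add: distrib_left ds_add mult_single ds_single wt_plus powr_add distrib_left algebra_simps)
qed

lemma ds_mult: "deg_scale q r (f * g) = deg_scale q r f * deg_scale q r g"
proof (induction f rule: pm_induct)
  case 1 then show ?case by (simp add: ds_zero)
next
  case (2 f l d)
  then show ?case by (simp add: distrib_right ds_add ds_mult_single)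
qed

lemma sc_mult: "sc a * sc b = sc (a * b)"
  by (simp add: sc_def mult_single)

lemma sc_comm: "x * sc c = sc c * x"
proof (induction x rule: pm_induct)
  case 1 then show ?case by simp
next
  case (2 f k d)
  then show ?case by (simp add: sc_def distrib_left distrib_right mult_single mult.commute)
qed

lemma ds_sc: "q > 0 \<Longrightarrow> deg_scale q r (sc c) = sc c"
  by (simp add: sc_def ds_single wt_zero)

lemma ds_gen: "deg_scale q r (gen g) = sc (complex_of_real (q powr (r * of_int (gwt g)))) * gen g"
  by (simp add: gen_def sc_def ds_single mult_single wt_def)

lemma ds_one: "q > 0 \<Longrightarrow> deg_scale q r 1 = 1"
  using ds_sc[of q r 1] by (simp add: sc_def)

lemma sc_assoc: "sc a * (sc b * x) = sc (a*b) * x"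
  by (simp add: mult.assoc[symmetric] sc_mult)
lemma gen_sc: "gen g * (sc c * x) = sc c * (gen g * x)"
  by (metis mult.assoc sc_comm)

lemma ideal_sc: "x \<in> rel_ideal q \<Longrightarrow> sc c * x \<in> rel_ideal q"
  using mult_in[of x q "sc c" 1] by simp

lemma sc1: "sc 1 = 1" by (simp add: sc_def)
lemma fact1: "sc k * A - sc (c*k) * B = sc k * (A - sc c * B)"
  by (simp add: right_diff_distrib sc_assoc mult.commute)

lemma ds_rel:
  assumes "q > 0" "x \<in> relations q"
  shows "deg_scale q r x \<in> rel_ideal q"
proof -
  define s where "s = q powr r"
  have s: "q powr (r * -1) = inverse s" "q powr (r * 1) = s" "s > 0"
    using assms(1) by (simp_all add: s_def powr_minus)
  have inv: "complex_of_real (inverse s) * complex_of_real s = 1" "complex_of_real s * complex_of_real (inverse s) = 1"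
    using s(3) by (simp_all flip: of_real_mult)
  have G: "deg_scale q r ea = sc (inverse s) * ea" "deg_scale q r ec = sc (inverse s) * ec"
     "deg_scale q r east = sc s * east" "deg_scale q r ecst = sc s * ecst"
    by (simp_all add: ds_gen gwt_def s_def powr_minus)
  show ?thesis using assms(2) unfolding relations_def
    apply (elim insertE)
    apply (simp_all only: ds_mult ds_add ds_diff ds_sc[OF assms(1)] ds_one[OF assms(1)] G mult.assoc sc_assoc gen_sc)
    apply (simp_all only: inv sc1 mult_1_left mult_1_right fact1)
    apply (simp_all add: relations_def gen_in ideal_sc[OF gen_in])
    done
qed
lemma ds_ideal:
  assumes "q > 0" "x \<in> rel_ideal q"
  shows "deg_scale q r x \<in> rel_ideal q"
  using assms(2)
proof (induction rule: rel_ideal.induct)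
  case (gen_in r) then show ?case using ds_rel[OF assms(1)] by blast
next
  case zero_in then show ?case by (simp add: ds_zero rel_ideal.zero_in)
next
  case (add_in x y) then show ?case by (simp add: ds_add rel_ideal.add_in)
next
  case (mult_in x u v) then show ?case by (simp add: ds_mult rel_ideal.mult_in)
qed

lemma ideal_neg: "x \<in> rel_ideal q \<Longrightarrow> - x \<in> rel_ideal q"
  using mult_in[of x q "-1" 1] by simp

lemma ds_double:
  assumes "q > 0" "deg_scale q r x - x \<in> rel_ideal q"
  shows "deg_scale q (r + r) x - x \<in> rel_ideal q"
proof -
  have e: "deg_scale q (r + r) x - x = deg_scale q r (deg_scale q r x - x) + (deg_scale q r x - x)"
    by (simp add: ds_diff ds_comp)
  show ?thesis unfolding e by (rule add_in[OF ds_ideal[OF assms] assms(2)])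
qed

lemma h_cong:
  assumes "is_haar_state q h" "x - y \<in> rel_ideal q"
  shows "h x = h y"
proof -
  have A: "\<forall>x y. h (x + y) = h x + h y"
    using assms(1) unfolding is_haar_state_def by (elim conjE) assumption
  have Z: "\<forall>x\<in>rel_ideal q. h x = 0"
    using assms(1) unfolding is_haar_state_def by (elim conjE) assumption
  have "h x = h (y + (x - y))" by simp
  also have "\<dots> = h y + h (x - y)" using A by (rule spec2)
  also have "h (x - y) = 0" using Z assms(2) by (rule bspec)
  finally show ?thesis by simp
qed

theorem lemma5p3:
  fixes q :: real and h :: "falg \<Rightarrow> complex" and \<sigma> :: "falg \<Rightarrow> falg"
    and a0 a1 a2 a3 :: falg
  assumes "0 < q" and "q < 1"
    and "is_haar_state q h"
    and "is_modular_aut q h \<sigma>"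
    and "a0 \<in> CP1 q" and "a1 \<in> CP1 q" and "a2 \<in> CP1 q" and "a3 \<in> CP1 q"
  shows "int_h h (rmul2 q (lmul2 a0 (wedge q (del q a1) (delbar q a2))) a3)
       = int_h h (lmul2 (\<sigma> a3 * a0) (wedge q (del q a1) (delbar q a2)))"
proof -
  define W where "W = wedge q (del q a1) (delbar q a2)"
  have k: "deg_scale q (1/2) a3 - a3 \<in> rel_ideal q"
    using assms(8) unfolding CP1_def suq_eq_def Kact_def by simp
  have k1: "deg_scale q 1 a3 - a3 \<in> rel_ideal q"
    using ds_double[OF assms(1) k] by simp
  have k2: "deg_scale q 2 a3 - a3 \<in> rel_ideal q"
    using ds_double[OF assms(1) k1] by simp
  have sig: "\<sigma> (deg_scale q 2 a3) - \<sigma> a3 \<in> rel_ideal q"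
    using assms(4) k2 unfolding is_modular_aut_def suq_eq_def by blast
  have mod: "h ((a0 * W) * deg_scale q 2 a3) = h (\<sigma> (deg_scale q 2 a3) * (a0 * W))"
    using assms(4) unfolding is_modular_aut_def by blast
  have d: "\<sigma> (deg_scale q 2 a3) * (a0 * W) - \<sigma> a3 * (a0 * W) = 1 * (\<sigma> (deg_scale q 2 a3) - \<sigma> a3) * (a0 * W)"
    by (simp add: left_diff_distrib)
  have "h (\<sigma> (deg_scale q 2 a3) * (a0 * W)) = h (\<sigma> a3 * (a0 * W))"
    apply (rule h_cong[OF assms(3)])
    unfolding d by (rule mult_in[OF sig])
  then show ?thesis using mod
    unfolding int_h_def rmul2_def lmul2_def W_def[symmetric] by (simp add: mult.assoc)
qed
end
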